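(* In the variety of nonempty sets, a nonempty set $G$ is geometrically stable if and only if $|G|=1$.
   Context: Regard nonempty sets as left $S$-acts over the trivial monoid $S=\{1\}$: the free object on a nonempty finite set $X$ is $X$, homomorphisms are arbitrary maps, congruences are equivalence relations. For a set $G$ and a set $A$ of maps $X\to G$, let $A'=\bigcap_{\mu\in A}\ker\mu$ (empty intersection $=X\times X$), where $\ker\mu=\{(x,y):\mu(x)=\mu(y)\}$; for a relation $T\subseteq X\times X$ let $T'_G=\{\mu:X\to G: T\subseteq\ker\mu\}$; and $A''=(A')'_G$. A set $A$ of maps $X\to G$ is an algebraic variety if $A=T'_G$ for some relation $T$ on $X$. $G$ is geometrically stable iff for every nonempty finite set $X$ and all algebraic varieties $A,B$ of maps $X\to G$, one has $(A\cup B)''=A\cup B$. *)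

theory Defs
  imports Main "HOL-Library.FuncSet"
begin

(* Acts over the trivial monoid = nonempty sets; maps X \<rightarrow> G are the
  extensional functions in PiE X (%_. G).  Free objects on finite sets X are
  represented by finite nonempty sets of naturals (every finite set is in
  bijection with one). *)

definition ker_on :: "'x set \<Rightarrow> ('x \<Rightarrow> 'g) \<Rightarrow> ('x \<times> 'x) set" where
  "ker_on X \<mu> = {(x, y). x \<in> X \<and> y \<in> X \<and> \<mu> x = \<mu> y}"

definition prime_maps :: "'x set \<Rightarrow> ('x \<Rightarrow> 'g) set \<Rightarrow> ('x \<times> 'x) set" where
  "prime_maps X A = (X \<times> X) \<inter> \<Inter> (ker_on X ` A)"

definition prime_rel :: "'x set \<Rightarrow> 'g set \<Rightarrow> ('x \<times> 'x) set \<Rightarrow> ('x \<Rightarrow> 'g) set" where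
  "prime_rel X G T = {\<mu> \<in> X \<rightarrow>\<^sub>E G. T \<subseteq> ker_on X \<mu>}"

definition dprime :: "'x set \<Rightarrow> 'g set \<Rightarrow> ('x \<Rightarrow> 'g) set \<Rightarrow> ('x \<Rightarrow> 'g) set" where
  "dprime X G A = prime_rel X G (prime_maps X A)"

definition algebraic_variety :: "'x set \<Rightarrow> 'g set \<Rightarrow> ('x \<Rightarrow> 'g) set \<Rightarrow> bool" where
  "algebraic_variety X G A \<longleftrightarrow> (\<exists>T. T \<subseteq> X \<times> X \<and> A = prime_rel X G T)"

definition geometrically_stable :: "'g set \<Rightarrow> bool" where
  "geometrically_stable G \<longleftrightarrow>
     (\<forall>X :: nat set. finite X \<and> X \<noteq> {} \<longrightarrow>
        (\<forall>A B. algebraic_variety X G A \<and> algebraic_variety X G B \<longrightarrow>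
               dprime X G (A \<union> B) = A \<union> B))"

end

theory Submission
  imports Defs
begin

lemma PE1: assumes "G = {g}" shows "X \<rightarrow>\<^sub>E G = {(\<lambda>x. if x \<in> X then g else undefined)}"
proof (rule set_eqI, rule iffI)
  fix f assume "f \<in> X \<rightarrow>\<^sub>E G"
  hence "f = (\<lambda>x. if x \<in> X then g else undefined)" using assms by (intro ext) (auto simp: PiE_def extensional_def)
  thus "f \<in> {(\<lambda>x. if x \<in> X then g else undefined)}" by simp
next
  fix f assume "f \<in> {(\<lambda>x. if x \<in> X then g else undefined)}"
  thus "f \<in> X \<rightarrow>\<^sub>E G" using assms by auto
qed

lemma one_dir:
  assumes "G = {g}" shows "geometrically_stable G"
  unfolding geometrically_stable_def
proof (intro allI impI, elim conjE)
  fix X :: "nat set" and A B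
  assume "algebraic_variety X G A" "algebraic_variety X G B"
  define c where "c = (\<lambda>x. if x \<in> X then g else undefined)"
  have PE: "X \<rightarrow>\<^sub>E G = {c}" using PE1[OF assms, of X] by (simp add: c_def)
  have kc: "ker_on X c = X \<times> X" by (auto simp: ker_on_def c_def)
  have var: "prime_rel X G T = {c}" if "T \<subseteq> X \<times> X" for T
    using that PE kc by (auto simp: prime_rel_def)
  have "A = {c}" "B = {c}" using \<open>algebraic_variety X G A\<close> \<open>algebraic_variety X G B\<close> var
    by (auto simp: algebraic_variety_def)
  then show "dprime X G (A \<union> B) = A \<union> B"
    by (simp add: dprime_def prime_maps_def kc var)
qed

lemma other_dir:
  assumes "a \<in> G" "b \<in> G" "a \<noteq> b" shows "\<not> geometrically_stable G"
proof
  assume st: "geometrically_stable G"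
  define X :: "nat set" where "X = {0,1,2}"
  define A where "A = prime_rel X G {(0,1)}"
  define B where "B = prime_rel X G {(1,2)}"
  have vA: "algebraic_variety X G A" unfolding algebraic_variety_def A_def
    by (rule exI[of _ "{(0,1)}"]) (simp add: X_def)
  have vB: "algebraic_variety X G B" unfolding algebraic_variety_def B_def
    by (rule exI[of _ "{(1,2)}"]) (simp add: X_def)
  have fX: "finite X \<and> X \<noteq> {}" by (simp add: X_def)
  have eq: "dprime X G (A \<union> B) = A \<union> B"
    using st[unfolded geometrically_stable_def, rule_format, OF fX] vA vB by blast
  define m1 where "m1 = (\<lambda>x. if x \<in> X then (if x = 2 then b else a) else undefined)"
  define m2 where "m2 = (\<lambda>x. if x \<in> X then (if x = 0 then b else a) else undefined)"
  define n where "n = (\<lambda>x. if x \<in> X then (if x = 1 then b else a) else undefined)"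
  have "m1 \<in> X \<rightarrow>\<^sub>E G" "m2 \<in> X \<rightarrow>\<^sub>E G" using assms by (auto simp: m1_def m2_def)
  moreover have "(0,1) \<in> ker_on X m1" "(1,2) \<in> ker_on X m2"
    by (simp_all add: ker_on_def m1_def m2_def X_def)
  ultimately have "m1 \<in> A" "m2 \<in> B" by (auto simp: A_def B_def prime_rel_def)
  have pm: "prime_maps X (A \<union> B) \<subseteq> ker_on X n"
  proof
    fix p assume p: "p \<in> prime_maps X (A \<union> B)"
    obtain x y where xy: "p = (x,y)" by force
    have "(x,y) \<in> ker_on X m1" "(x,y) \<in> ker_on X m2" "x \<in> X" "y \<in> X"
      using p xy \<open>m1 \<in> A\<close> \<open>m2 \<in> B\<close> by (auto simp: prime_maps_def)
    have v: "m1 0 = a" "m1 1 = a" "m1 2 = b" "m2 0 = b" "m2 1 = a" "m2 2 = a"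
      by (simp_all add: m1_def m2_def X_def)
    have "m1 x = m1 y" "m2 x = m2 y" using \<open>(x,y) \<in> ker_on X m1\<close> \<open>(x,y) \<in> ker_on X m2\<close>
      by (auto simp: ker_on_def)
    moreover have "x \<in> {0,1,2}" "y \<in> {0,1,2}" using \<open>x \<in> X\<close> \<open>y \<in> X\<close> X_def by auto
    ultimately have "x = y" using assms(3) v by auto
    thus "p \<in> ker_on X n" using xy \<open>x \<in> X\<close> by (auto simp: ker_on_def)
  qed
  have "n \<in> X \<rightarrow>\<^sub>E G" using assms by (auto simp: n_def)
  hence "n \<in> dprime X G (A \<union> B)" using pm by (auto simp: dprime_def prime_rel_def)
  moreover have "n \<notin> A \<union> B"
  proof
    have v: "n 0 = a" "n 1 = b" "n 2 = a" by (simp_all add: n_def X_def)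
    assume "n \<in> A \<union> B"
    hence "(0::nat,1::nat) \<in> ker_on X n \<or> (1::nat,2::nat) \<in> ker_on X n"
      by (auto simp: A_def B_def prime_rel_def)
    thus False using v assms(3) by (auto simp: ker_on_def)
  qed
  ultimately show False using eq by simp
qed

theorem proposition2p4:
  fixes G :: "'g set"
  assumes "G \<noteq> {}"
  shows "geometrically_stable G \<longleftrightarrow> card G = 1"
proof
  assume st: "geometrically_stable G"
  show "card G = 1"
  proof (rule ccontr)
    assume "card G \<noteq> 1"
    obtain a where a: "a \<in> G" using assms by blast
    have "G \<noteq> {a}" using \<open>card G \<noteq> 1\<close> by auto
    then obtain b where "b \<in> G" "b \<noteq> a" using a by blast
    thus False using other_dir[OF a] st by blast
  qed
next
  assume "card G = 1"
  then obtain g where "G = {g}" using card_1_singletonE by blast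
  thus "geometrically_stable G" by (rule one_dir)
qed

end
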